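(* Let $G=(X,b,m,c)$ be a weighted graph with $c=0$ and let $p\in(1,\infty)$. The following are equivalent: (i) $G$ is $p$-parabolic; (ii) for every subset $V\subsetneq X$ with $\partial_eV\ne\emptyset$ and every function $u\colon X\to\mathbb{R}$ which is bounded on $\overline V=V\cup\partial_eV$, belongs to $F^p(V)$ and satisfies $\Delta_pu\le0$ on $V$, one has $\sup_{\overline V}u=\sup_{\partial_eV}u$.
   Context: Weighted graph $G=(X,b,m,c)$: $X$ countably infinite; $b$ symmetric, nonnegative, zero on the diagonal, $\sum_yb(x,y)<\infty$; $m>0$; $c\ge0$; $x\sim y$ iff $b(x,y)>0$; $X$ connected. $\mathcal{E}_p(f)=\frac12\sum_{x,y}b(x,y)|f(x)-f(y)|^p+\sum_xc(x)|f(x)|^p$; $G$ is $p$-parabolic if $\inf\{\mathcal{E}_p(\varphi):\varphi\text{ finitely supported},\varphi\ge1\text{ on }K\}=0$ for every finite $K$. $\partial_eV=\{y\in X\setminus V: y\sim z\text{ for some }z\in V\}$. $a^{\langle p-1\rangle}=|a|^{p-2}a$; $F^p(V)=\{f:\sum_yb(x,y)|f(x)-f(y)|^{p-1}<\infty\ \forall x\in V\}$; $\Delta_pf(x)=\frac1{m(x)}\sum_yb(x,y)(f(x)-f(y))^{\langle p-1\rangle}$. *)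

theory Defs
  imports "HOL-Analysis.Analysis"
begin

text \<open>Weighted graph on the vertex type 'a (X = UNIV :: 'a set).\<close>

definition weighted_graph :: "('a \<Rightarrow> 'a \<Rightarrow> real) \<Rightarrow> ('a \<Rightarrow> real) \<Rightarrow> ('a \<Rightarrow> real) \<Rightarrow> bool" where
  "weighted_graph b m c \<longleftrightarrow>
     countable (UNIV :: 'a set) \<and> infinite (UNIV :: 'a set) \<and>
     (\<forall>x y. b x y = b y x) \<and> (\<forall>x y. 0 \<le> b x y) \<and> (\<forall>x. b x x = 0) \<and>
     (\<forall>x. (\<lambda>y. b x y) summable_on UNIV) \<and>
     (\<forall>x. 0 < m x) \<and> (\<forall>x. 0 \<le> c x) \<and>
     (\<forall>x y. (\<lambda>u v. 0 < b u v)\<^sup>*\<^sup>* x y)"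

definition energy :: "('a \<Rightarrow> 'a \<Rightarrow> real) \<Rightarrow> ('a \<Rightarrow> real) \<Rightarrow> real \<Rightarrow> ('a \<Rightarrow> real) \<Rightarrow> real" where
  "energy b c p f =
     (1/2) * (\<Sum>\<^sub>\<infinity>(x,y)\<in>UNIV. b x y * \<bar>f x - f y\<bar> powr p)
     + (\<Sum>\<^sub>\<infinity>x\<in>UNIV. c x * \<bar>f x\<bar> powr p)"

definition p_parabolic :: "('a \<Rightarrow> 'a \<Rightarrow> real) \<Rightarrow> ('a \<Rightarrow> real) \<Rightarrow> real \<Rightarrow> bool" where
  "p_parabolic b c p \<longleftrightarrow>
     (\<forall>K. finite K \<longrightarrow>
        Inf {energy b c p \<phi> | \<phi>. finite {x. \<phi> x \<noteq> 0} \<and> (\<forall>x\<in>K. 1 \<le> \<phi> x)} = 0)"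

definition edge_boundary :: "('a \<Rightarrow> 'a \<Rightarrow> real) \<Rightarrow> 'a set \<Rightarrow> 'a set" where
  "edge_boundary b V = {y. y \<notin> V \<and> (\<exists>z\<in>V. 0 < b y z)}"


definition Fp :: "('a \<Rightarrow> 'a \<Rightarrow> real) \<Rightarrow> real \<Rightarrow> 'a set \<Rightarrow> ('a \<Rightarrow> real) set" where
  "Fp b p V = {f. \<forall>x\<in>V. (\<lambda>y. b x y * \<bar>f x - f y\<bar> powr (p - 1)) summable_on UNIV}"

definition p_laplacian :: "('a \<Rightarrow> 'a \<Rightarrow> real) \<Rightarrow> ('a \<Rightarrow> real) \<Rightarrow> real \<Rightarrow> ('a \<Rightarrow> real) \<Rightarrow> 'a \<Rightarrow> real" where
  "p_laplacian b m p f x = (1 / m x) * (\<Sum>\<^sub>\<infinity>y\<in>UNIV. b x y * \<bar>f x - f y\<bar> powr (p - 2) * (f x - f y))"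

end

theory Submission
  imports Defs
begin


locale wg =
  fixes b :: "'a \<Rightarrow> 'a \<Rightarrow> real" and p :: real
  assumes bsym: "\<And>x y. b x y = b y x"
    and bnn: "\<And>x y. 0 \<le> b x y"
    and bdiag: "\<And>x. b x x = 0"
    and bsum: "\<And>x. (\<lambda>y. b x y) summable_on UNIV"
    and conn: "\<And>x y. (\<lambda>u v. 0 < b u v)\<^sup>*\<^sup>* x y"
    and infX: "infinite (UNIV :: 'a set)"
    and p1: "1 < p"
begin

definition phi :: "real \<Rightarrow> real" where
  "phi t = \<bar>t\<bar> powr (p - 2) * t"

lemma phi_alt: "phi t = sgn t * \<bar>t\<bar> powr (p - 1)"
proof (cases "t = 0")
  case False
  have "\<bar>t\<bar> powr (p - 1) = \<bar>t\<bar> powr ((p - 2) + 1)" by simp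
  also have "\<dots> = \<bar>t\<bar> powr (p - 2) * \<bar>t\<bar> powr 1" by (rule powr_add)
  finally have "\<bar>t\<bar> powr (p - 1) = \<bar>t\<bar> powr (p - 2) * \<bar>t\<bar>" by simp
  then show ?thesis using False unfolding phi_def
    by (cases "t > 0") (auto simp: sgn_if)
qed (simp add: phi_def)

lemma phi_abs: "\<bar>phi t\<bar> = \<bar>t\<bar> powr (p - 1)"
  by (simp add: phi_alt abs_mult abs_sgn_eq) 

lemma phi_0[simp]: "phi 0 = 0" by (simp add: phi_def)

lemma phi_times: "phi t * t = \<bar>t\<bar> powr p"
proof (cases "t = 0")
  case False
  have "\<bar>t\<bar> powr p = \<bar>t\<bar> powr ((p - 2) + 2)" by simp
  also have "\<dots> = \<bar>t\<bar> powr (p - 2) * \<bar>t\<bar> powr 2" by (rule powr_add)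
  also have "\<bar>t\<bar> powr 2 = t * t" using False by (simp add: powr_numeral power2_eq_square)
  finally show ?thesis by (simp add: phi_def mult.assoc)
qed (simp add: phi_def)

lemma phi_pos_form: "t \<ge> 0 \<Longrightarrow> phi t = t powr (p - 1)"
  by (cases "t = 0") (auto simp: phi_alt)

lemma phi_neg: "phi (- t) = - phi t"
  by (simp add: phi_def)

lemma phi_swap: "phi (a - c) = - phi (c - a)"
  by (metis minus_diff_eq phi_neg)

lemma phi_strict_mono: assumes "s < t" shows "phi s < phi t"
proof -
  have pp: "0 < p - 1" using p1 by simp
  consider "0 \<le> s" | "s < 0" "0 \<le> t" | "t < 0" using assms by linarith
  then show ?thesis
  proof cases
    case 1 then show ?thesis using assms pp by (simp add: phi_pos_form powr_less_mono2)
  next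
    case 2
    have "phi s = - ((-s) powr (p-1))" using phi_neg[of "-s"] phi_pos_form[of "-s"] 2 by simp
    moreover have "0 < (-s) powr (p-1)" using 2 by simp
    moreover have "0 \<le> phi t" using 2 by (simp add: phi_pos_form)
    ultimately show ?thesis by linarith
  next
    case 3
    have "phi s = - ((-s) powr (p-1))" "phi t = - ((-t) powr (p-1))"
      using phi_neg[of "-s"] phi_pos_form[of "-s"] phi_neg[of "-t"] phi_pos_form[of "-t"] 3 assms by simp_all
    moreover have "(-t) powr (p-1) < (-s) powr (p-1)" using 3 assms pp by (simp add: powr_less_mono2)
    ultimately show ?thesis by linarith
  qed
qed

lemma phi_mono: "s \<le> t \<Longrightarrow> phi s \<le> phi t"
  using phi_strict_mono by (cases "s = t") (auto intro: less_imp_le)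

lemma phi_mono_iff: "phi s \<le> phi t \<longleftrightarrow> s \<le> t"
  using phi_strict_mono phi_mono by (meson linorder_not_le)

lemma phi_scale: assumes "0 \<le> c" shows "phi (c * t) = c powr (p - 1) * phi t"
proof (cases "c = 0")
  case False
  then show ?thesis using assms by (simp add: phi_alt abs_mult powr_mult sgn_mult)
qed (use p1 in \<open>simp add: phi_def\<close>)

lemma phi_bound: "\<bar>t\<bar> \<le> 1 \<Longrightarrow> \<bar>phi t\<bar> \<le> 1"
  unfolding phi_abs using p1 powr_mono2[of "p-1" "\<bar>t\<bar>" 1] by simp

lemma phi_isCont: "isCont phi t"
proof (cases "t = 0")
  case True
  have "((\<lambda>s. \<bar>s\<bar> powr (p - 1)) \<longlongrightarrow> \<bar>0\<bar> powr (p-1)) (at 0)"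
    using p1 by (intro tendsto_powr' tendsto_intros) auto
  then have "((\<lambda>s. \<bar>phi s\<bar>) \<longlongrightarrow> 0) (at 0)" by (simp add: phi_abs)
  then have "(phi \<longlongrightarrow> 0) (at 0)" by (simp add: tendsto_rabs_zero_iff)
  then show ?thesis using True by (simp add: isCont_def)
next
  case False
  have "((\<lambda>s. \<bar>s\<bar> powr (p - 2) * s) \<longlongrightarrow> \<bar>t\<bar> powr (p-2) * t) (at t)"
    using False by (intro tendsto_intros tendsto_powr') auto
  then show ?thesis by (simp add: isCont_def phi_def[abs_def])
qed


lemma cross_edge:
  assumes "R\<^sup>*\<^sup>* x y" "P x" "\<not> P y"
  shows "\<exists>u v. R u v \<and> P u \<and> \<not> P v"
  using assms by (induction rule: rtranclp_induct) auto

lemma has_neighbor: "\<exists>y. 0 < b x y"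
proof -
  obtain w where "w \<noteq> x" using infX by (metis UNIV_eq_I finite.intros insertCI)
  from cross_edge[of "\<lambda>u v. 0 < b u v" x w "\<lambda>v. v = x", OF conn] this
  show ?thesis by auto
qed

lemma summable_bdd:
  assumes "\<And>y. \<bar>g y\<bar> \<le> C"
  shows "(\<lambda>y. b x y * g y) summable_on UNIV"
proof -
  have "(\<lambda>y. b x y * C) summable_on UNIV"
    using bsum[of x] by (rule summable_on_cmult_left)
  then have "(\<lambda>y. \<bar>b x y * g y\<bar>) summable_on UNIV"
    by (rule summable_on_comparison_test) (use assms bnn in \<open>auto simp: abs_mult intro: mult_left_mono\<close>)
  then show ?thesis using summable_on_iff_abs_summable_on_real by fastforce
qed

definition tD :: "'a set \<Rightarrow> 'a \<Rightarrow> real" where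
  "tD D x = infsum (\<lambda>y. b x y) (- D)"

lemma bsum_sub: "(\<lambda>y. b x y) summable_on A"
  using bsum by (rule summable_on_subset) auto

lemma tD_nonneg: "0 \<le> tD D x"
  unfolding tD_def by (rule infsum_nonneg) (simp add: bnn)

lemma tD_ge: assumes "y \<notin> D" shows "b x y \<le> tD D x"
proof -
  have "infsum (\<lambda>y. b x y) {y} \<le> infsum (\<lambda>y. b x y) (- D)"
    by (rule infsum_mono_neutral) (use assms bnn bsum_sub in auto)
  then show ?thesis by (simp add: tD_def)
qed

lemma sum_outside:
  assumes "finite D" "\<And>y. y \<notin> D \<Longrightarrow> h y = h0"
  shows "(\<lambda>y. b x y * h y) summable_on UNIV"
    and "infsum (\<lambda>y. b x y * h y) UNIV = (\<Sum>y\<in>D. b x y * h y) + tD D x * h0"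
proof -
  have s1: "(\<lambda>y. b x y * h y) summable_on D" using assms(1) by simp
  have s2': "(\<lambda>y. b x y * h0) summable_on (- D)"
    using bsum_sub by (rule summable_on_cmult_left)
  have s2: "(\<lambda>y. b x y * h y) summable_on (- D)"
    using s2' by (rule summable_on_cong[THEN iffD1, rotated]) (use assms(2) in auto)
  have U: "UNIV = D \<union> - D" by auto
  show "(\<lambda>y. b x y * h y) summable_on UNIV"
    using summable_on_union[OF s1 s2] U by simp
  have "infsum (\<lambda>y. b x y * h y) UNIV = infsum (\<lambda>y. b x y * h y) D + infsum (\<lambda>y. b x y * h y) (- D)"
    by (subst U, rule infsum_Un_disjoint[OF s1 s2]) auto
  also have "infsum (\<lambda>y. b x y * h y) (- D) = infsum (\<lambda>y. b x y * h0) (- D)"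
    by (rule infsum_cong) (use assms(2) in auto)
  also have "\<dots> = tD D x * h0" unfolding tD_def by (rule infsum_cmult_left')
  finally show "infsum (\<lambda>y. b x y * h y) UNIV = (\<Sum>y\<in>D. b x y * h y) + tD D x * h0"
    using assms(1) by simp
qed

definition Lsum :: "('a \<Rightarrow> real) \<Rightarrow> 'a \<Rightarrow> real" where
  "Lsum f x = infsum (\<lambda>y. b x y * \<bar>f x - f y\<bar> powr (p - 2) * (f x - f y)) UNIV"

lemma Lsum_phi: "Lsum f x = infsum (\<lambda>y. b x y * phi (f x - f y)) UNIV"
  unfolding Lsum_def phi_def by (simp add: mult.assoc)

definition LD :: "'a set \<Rightarrow> ('a \<Rightarrow> real) \<Rightarrow> 'a \<Rightarrow> real" where
  "LD D f x = (\<Sum>y\<in>D. b x y * phi (f x - f y)) + tD D x * phi (f x)"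

lemma Lsum_LD:
  assumes "finite D" "\<And>y. y \<notin> D \<Longrightarrow> f y = 0"
  shows "Lsum f x = LD D f x" and "(\<lambda>y. b x y * phi (f x - f y)) summable_on UNIV"
  using sum_outside[of D "\<lambda>y. phi (f x - f y)" "phi (f x)" x] assms
  by (auto simp: Lsum_phi LD_def)

lemma summable_phi_bdd:
  assumes "\<And>y. \<bar>f y\<bar> \<le> C"
  shows "(\<lambda>y. b x y * phi (f x - f y)) summable_on UNIV"
proof (rule summable_bdd)
  fix y
  have "\<bar>f x - f y\<bar> \<le> 2 * C" using assms[of x] assms[of y] by linarith
  then show "\<bar>phi (f x - f y)\<bar> \<le> (2 * C) powr (p - 1)"
    unfolding phi_abs using p1 by (intro powr_mono2) auto
qed

lemma strict_infsum:
  fixes f g :: "'a \<Rightarrow> real"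
  assumes "f summable_on UNIV" "g summable_on UNIV" "\<And>y. f y \<le> g y" "f y0 < g y0"
  shows "infsum f UNIV < infsum g UNIV"
  using has_sum_strict_mono[OF has_sum_infsum[OF assms(1)] has_sum_infsum[OF assms(2)]] assms(3,4)
  by blast


definition ED :: "'a set \<Rightarrow> ('a \<Rightarrow> real) \<Rightarrow> real" where
  "ED D f = (1/2) * (\<Sum>x\<in>D. \<Sum>y\<in>D. b x y * \<bar>f x - f y\<bar> powr p) + (\<Sum>x\<in>D. tD D x * \<bar>f x\<bar> powr p)"

lemma supp_bound:
  fixes f :: "'a \<Rightarrow> real"
  assumes "finite D" "\<And>y. y \<notin> D \<Longrightarrow> f y = 0"
  shows "\<bar>f y\<bar> \<le> (\<Sum>z\<in>D. \<bar>f z\<bar>)"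
proof (cases "y \<in> D")
  case True then show ?thesis using assms(1) member_le_sum[of y D "\<lambda>z. \<bar>f z\<bar>"] by auto
next
  case False then show ?thesis using assms by (simp add: sum_nonneg)
qed

lemma F_summable:
  assumes "finite D" "\<And>y. y \<notin> D \<Longrightarrow> f y = 0"
  shows "(\<lambda>(x,y). b x y * \<bar>f x - f y\<bar> powr p) summable_on (UNIV \<times> D)"
    and "(\<lambda>(x,y). b x y * \<bar>f x - f y\<bar> powr p) summable_on UNIV"
proof -
  define C where "C = (\<Sum>z\<in>D. \<bar>f z\<bar>)"
  have fC: "\<bar>f y\<bar> \<le> C" for y unfolding C_def by (rule supp_bound[OF assms])
  define F where "F = (\<lambda>(x,y). b x y * \<bar>f x - f y\<bar> powr p)"
  have row: "(\<lambda>y. F (x, y)) summable_on UNIV" for x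
    unfolding F_def case_prod_conv
  proof (rule summable_bdd)
    fix y
    have "\<bar>f x - f y\<bar> \<le> 2 * C" using fC[of x] fC[of y] by linarith
    then show "\<bar>\<bar>f x - f y\<bar> powr p\<bar> \<le> (2 * C) powr p" using p1 by (auto intro: powr_mono2)
  qed
  have s1: "F summable_on (D \<times> UNIV)"
    by (rule summable_on_SigmaI[where g = "\<lambda>x. infsum (\<lambda>y. F (x, y)) UNIV"])
       (use row assms(1) in \<open>auto simp: F_def bnn\<close>)
  have Fsym: "(\<lambda>(x,y). F (y,x)) = F"
    by (auto simp: F_def bsym abs_minus_commute)
  have s2: "F summable_on (UNIV \<times> D)"
    using s1 by (subst summable_on_swap) (simp add: Fsym)
  then show "(\<lambda>(x,y). b x y * \<bar>f x - f y\<bar> powr p) summable_on (UNIV \<times> D)" by (simp add: F_def)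
  have z: "\<And>x y. x \<notin> D \<Longrightarrow> y \<notin> D \<Longrightarrow> b x y * \<bar>f x - f y\<bar> powr p = 0"
    using assms(2) by simp
  have s3: "F summable_on (D \<times> UNIV \<union> UNIV \<times> D)" by (rule summable_on_union[OF s1 s2])
  show "(\<lambda>(x,y). b x y * \<bar>f x - f y\<bar> powr p) summable_on UNIV"
    using s3 unfolding F_def
    by (rule summable_on_cong_neutral[THEN iffD1, rotated -1]) (auto simp del: abs_eq_0 powr_eq_0_iff mult_eq_0_iff intro: z)
qed

lemma energy_ED:
  assumes "finite D" "\<And>y. y \<notin> D \<Longrightarrow> f y = 0"
  shows "energy b (\<lambda>x. 0) p f = ED D f"
proof -
  define F where "F = (\<lambda>x y. b x y * \<bar>f x - f y\<bar> powr p)"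
  have sU: "(\<lambda>(x,y). F x y) summable_on UNIV" and sD: "(\<lambda>(x,y). F x y) summable_on (UNIV \<times> D)"
    using F_summable[OF assms] by (simp_all add: F_def)
  have inner: "infsum (F x) UNIV = (\<Sum>y\<in>D. F x y) + tD D x * \<bar>f x\<bar> powr p" for x
    using sum_outside(2)[of D "\<lambda>y. \<bar>f x - f y\<bar> powr p" "\<bar>f x\<bar> powr p" x] assms
    by (simp add: F_def)
  have col: "infsum (\<lambda>x. F x y) UNIV = (\<Sum>x\<in>D. F x y) + tD D y * \<bar>f y\<bar> powr p" for y
  proof -
    have "infsum (\<lambda>x. F x y) UNIV = infsum (F y) UNIV"
      by (rule infsum_cong) (simp add: F_def bsym abs_minus_commute)
    also have "\<dots> = (\<Sum>x\<in>D. F y x) + tD D y * \<bar>f y\<bar> powr p" by (rule inner)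
    also have "(\<Sum>x\<in>D. F y x) = (\<Sum>x\<in>D. F x y)"
      by (rule sum.cong) (simp_all add: F_def bsym abs_minus_commute)
    finally show ?thesis .
  qed
  have "infsum (\<lambda>(x,y). F x y) UNIV = infsum (\<lambda>x. infsum (F x) UNIV) UNIV"
    using infsum_Sigma'_banach[of F UNIV "\<lambda>_. UNIV"] sU by simp
  also have "\<dots> = infsum (\<lambda>x. (\<Sum>y\<in>D. F x y) + tD D x * \<bar>f x\<bar> powr p) UNIV"
    by (simp add: inner)
  also have "\<dots> = infsum (\<lambda>x. (\<Sum>y\<in>D. F x y)) UNIV + infsum (\<lambda>x. tD D x * \<bar>f x\<bar> powr p) UNIV"
  proof (rule infsum_add)
    have "(\<lambda>x. infsum (F x) D) summable_on UNIV"
      using summable_on_Sigma_banach[of F UNIV "\<lambda>_. D"] sD by simp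
    then show "(\<lambda>x. \<Sum>y\<in>D. F x y) summable_on UNIV" using assms(1) by simp
    have "(\<lambda>x. tD D x * \<bar>f x\<bar> powr p) summable_on D" using assms(1) by simp
    then show "(\<lambda>x. tD D x * \<bar>f x\<bar> powr p) summable_on UNIV"
      by (rule summable_on_cong_neutral[THEN iffD1, rotated -1]) (use assms(2) p1 in auto)
  qed
  also have "infsum (\<lambda>x. tD D x * \<bar>f x\<bar> powr p) UNIV = (\<Sum>x\<in>D. tD D x * \<bar>f x\<bar> powr p)"
  proof -
    have "infsum (\<lambda>x. tD D x * \<bar>f x\<bar> powr p) UNIV = infsum (\<lambda>x. tD D x * \<bar>f x\<bar> powr p) D"
      by (rule infsum_cong_neutral) (use assms(2) p1 in auto)
    then show ?thesis using assms(1) by simp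
  qed
  also have "infsum (\<lambda>x. (\<Sum>y\<in>D. F x y)) UNIV = infsum (\<lambda>x. infsum (\<lambda>y. F x y) D) UNIV"
    using assms(1) by simp
  also have "\<dots> = infsum (\<lambda>y. infsum (\<lambda>x. F x y) UNIV) D"
    by (rule infsum_swap_banach) (use sD in simp)
  also have "\<dots> = (\<Sum>y\<in>D. (\<Sum>x\<in>D. F x y) + tD D y * \<bar>f y\<bar> powr p)"
    using assms(1) by (simp add: col)
  also have "\<dots> = (\<Sum>x\<in>D. \<Sum>y\<in>D. F x y) + (\<Sum>y\<in>D. tD D y * \<bar>f y\<bar> powr p)"
    by (simp only: sum.distrib sum.swap[of "\<lambda>y x. F x y" D D])
  finally have "infsum (\<lambda>(x,y). F x y) UNIV = (\<Sum>x\<in>D. \<Sum>y\<in>D. F x y) + 2 * (\<Sum>x\<in>D. tD D x * \<bar>f x\<bar> powr p)"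
    by simp
  then show ?thesis unfolding energy_def ED_def F_def by simp
qed

lemma pair_bound:
  assumes "finite D" "\<And>y. y \<notin> D \<Longrightarrow> f y = 0"
  shows "b w w' * \<bar>f w - f w'\<bar> powr p \<le> energy b (\<lambda>x. 0) p f"
proof (cases "w = w'")
  case True
  have "0 \<le> energy b (\<lambda>x. 0) p f" unfolding energy_def
    by (auto intro!: infsum_nonneg simp: bnn)
  then show ?thesis using True by (simp add: bdiag)
next
  case False
  define F where "F = (\<lambda>(x,y). b x y * \<bar>f x - f y\<bar> powr p)"
  have sU: "F summable_on UNIV" using F_summable(2)[OF assms] by (simp add: F_def)
  have "infsum F {(w,w'), (w',w)} \<le> infsum F UNIV"
    by (rule infsum_mono_neutral) (use sU in \<open>auto simp: F_def bnn\<close>)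
  moreover have "infsum F {(w,w'), (w',w)} = 2 * (b w w' * \<bar>f w - f w'\<bar> powr p)"
    using False by (simp add: F_def bsym abs_minus_commute)
  ultimately show ?thesis unfolding energy_def F_def by simp
qed


lemma green:
  assumes "finite D"
  shows "(1/2) * (\<Sum>x\<in>D. \<Sum>y\<in>D. b x y * phi (f x - f y) * (g x - g y)) + (\<Sum>x\<in>D. tD D x * phi (f x) * g x)
       = (\<Sum>x\<in>D. g x * LD D f x)"
proof -
  have sw: "(\<Sum>x\<in>D. \<Sum>y\<in>D. b x y * phi (f x - f y) * g y) = - (\<Sum>x\<in>D. \<Sum>y\<in>D. b x y * phi (f x - f y) * g x)"
  proof -
    have "(\<Sum>x\<in>D. \<Sum>y\<in>D. b x y * phi (f x - f y) * g y) = (\<Sum>y\<in>D. \<Sum>x\<in>D. b x y * phi (f x - f y) * g y)"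
      by (rule sum.swap)
    also have "\<dots> = (\<Sum>y\<in>D. \<Sum>x\<in>D. - (b y x * phi (f y - f x) * g y))"
    proof (intro sum.cong refl)
      fix x y show "b x y * phi (f x - f y) * g y = - (b y x * phi (f y - f x) * g y)"
        using bsym[of y x] phi_swap[of "f y" "f x"] by simp
    qed
    also have "\<dots> = - (\<Sum>x\<in>D. \<Sum>y\<in>D. b x y * phi (f x - f y) * g x)"
      by (simp add: sum_negf)
    finally show ?thesis .
  qed
  have "(\<Sum>x\<in>D. \<Sum>y\<in>D. b x y * phi (f x - f y) * (g x - g y))
      = (\<Sum>x\<in>D. \<Sum>y\<in>D. b x y * phi (f x - f y) * g x) - (\<Sum>x\<in>D. \<Sum>y\<in>D. b x y * phi (f x - f y) * g y)"
    by (simp add: right_diff_distrib sum_subtractf)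
  also have "\<dots> = 2 * (\<Sum>x\<in>D. \<Sum>y\<in>D. b x y * phi (f x - f y) * g x)" using sw by simp
  finally have "(1/2) * (\<Sum>x\<in>D. \<Sum>y\<in>D. b x y * phi (f x - f y) * (g x - g y)) + (\<Sum>x\<in>D. tD D x * phi (f x) * g x)
     = (\<Sum>x\<in>D. (\<Sum>y\<in>D. b x y * phi (f x - f y) * g x) + tD D x * phi (f x) * g x)"
    by (simp add: sum.distrib)
  also have "\<dots> = (\<Sum>x\<in>D. g x * LD D f x)"
    by (intro sum.cong refl) (simp add: LD_def algebra_simps sum_distrib_left sum_distrib_right)
  finally show ?thesis .
qed

lemma convex_ineq: "\<bar>a\<bar> powr p + p * phi a * (c - a) \<le> \<bar>c\<bar> powr p"
proof -
  define q where "q = p / (p - 1)"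
  have q1: "q > 1" using p1 by (simp add: q_def field_simps)
  have pq: "1/q + 1/p = 1" using p1 by (simp add: q_def field_simps)
  have Y: "\<bar>a\<bar> powr (p - 1) * \<bar>c\<bar> \<le> (\<bar>a\<bar> powr (p - 1)) powr q / q + \<bar>c\<bar> powr p / p"
    by (rule Youngs_inequality) (use q1 p1 pq in auto)
  have "(\<bar>a\<bar> powr (p - 1)) powr q = \<bar>a\<bar> powr p"
    using p1 by (simp add: powr_powr q_def)
  then have Y2: "\<bar>a\<bar> powr (p - 1) * \<bar>c\<bar> \<le> \<bar>a\<bar> powr p * ((p - 1) / p) + \<bar>c\<bar> powr p / p"
    using Y p1 by (simp add: q_def)
  have "phi a * c \<le> \<bar>a\<bar> powr (p - 1) * \<bar>c\<bar>"
    by (metis abs_ge_self abs_mult phi_abs)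
  then have "p * (phi a * c) \<le> p * (\<bar>a\<bar> powr p * ((p - 1) / p) + \<bar>c\<bar> powr p / p)"
    using Y2 p1 by (intro mult_left_mono) auto
  also have "\<dots> = (p - 1) * \<bar>a\<bar> powr p + \<bar>c\<bar> powr p" using p1 by (simp add: field_simps)
  finally have "p * (phi a * c) \<le> (p - 1) * \<bar>a\<bar> powr p + \<bar>c\<bar> powr p" .
  moreover have "phi a * a = \<bar>a\<bar> powr p" by (rule phi_times)
  ultimately show ?thesis by (simp add: algebra_simps)
qed

lemma ED_min:
  assumes "finite D"
  shows "ED D f + p * (\<Sum>x\<in>D. (g x - f x) * LD D f x) \<le> ED D g"
proof -
  have "ED D f + p * (\<Sum>x\<in>D. (g x - f x) * LD D f x)
     = ED D f + p * ((1/2) * (\<Sum>x\<in>D. \<Sum>y\<in>D. b x y * phi (f x - f y) * ((g x - f x) - (g y - f y))) + (\<Sum>x\<in>D. tD D x * phi (f x) * (g x - f x)))"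
    using green[OF assms, of f "\<lambda>x. g x - f x"] by simp
  also have "\<dots> = (1/2) * (\<Sum>x\<in>D. \<Sum>y\<in>D. b x y * (\<bar>f x - f y\<bar> powr p + p * phi (f x - f y) * ((g x - g y) - (f x - f y))))
       + (\<Sum>x\<in>D. tD D x * (\<bar>f x\<bar> powr p + p * phi (f x) * (g x - f x)))"
  proof -
    have e1: "b x y * (\<bar>f x - f y\<bar> powr p + p * phi (f x - f y) * ((g x - g y) - (f x - f y)))
      = b x y * \<bar>f x - f y\<bar> powr p + p * (b x y * phi (f x - f y) * ((g x - f x) - (g y - f y)))" for x y
      by (simp add: algebra_simps)
    have e2: "tD D x * (\<bar>f x\<bar> powr p + p * phi (f x) * (g x - f x))
      = tD D x * \<bar>f x\<bar> powr p + p * (tD D x * phi (f x) * (g x - f x))" for x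
      by (simp add: algebra_simps)
    show ?thesis unfolding ED_def e1 e2
      by (simp only: sum.distrib sum_distrib_left[symmetric]) (simp add: algebra_simps)
  qed
  also have "\<dots> \<le> (1/2) * (\<Sum>x\<in>D. \<Sum>y\<in>D. b x y * \<bar>g x - g y\<bar> powr p) + (\<Sum>x\<in>D. tD D x * \<bar>g x\<bar> powr p)"
    by (intro add_mono mult_left_mono sum_mono convex_ineq) (auto simp: bnn tD_nonneg)
  also have "\<dots> = ED D g" by (simp add: ED_def)
  finally show ?thesis .
qed

lemma ED_green:
  assumes "finite D"
  shows "ED D f = (\<Sum>x\<in>D. f x * LD D f x)"
  using green[OF assms, of f f] unfolding ED_def by (simp add: mult.assoc phi_times)
lemma summable_phi_s:
  assumes "\<And>y. \<bar>v y\<bar> \<le> C"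
  shows "(\<lambda>y. b x y * phi (s - v y)) summable_on UNIV"
proof (rule summable_bdd)
  fix y
  have "\<bar>s - v y\<bar> \<le> \<bar>s\<bar> + C" using assms[of y] by linarith
  then show "\<bar>phi (s - v y)\<bar> \<le> (\<bar>s\<bar> + C) powr (p - 1)"
    unfolding phi_abs using p1 by (intro powr_mono2) auto
qed

lemma dirichlet:
  assumes D: "finite D" and AD: "A \<subseteq> D"
    and v0D: "\<And>y. y \<notin> D \<Longrightarrow> v0 y = 0"
    and v0b: "\<And>y. 0 \<le> v0 y \<and> v0 y \<le> 1"
    and v0sub: "\<And>x. x \<in> A \<Longrightarrow> Lsum v0 x \<le> 0"
  shows "\<exists>v. (\<forall>y. y \<notin> A \<longrightarrow> v y = v0 y) \<and> (\<forall>y. v0 y \<le> v y \<and> v y \<le> 1) \<and> (\<forall>x\<in>A. Lsum v x = 0)"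
proof -
  define G where "G x s v = infsum (\<lambda>y. b x y * phi (s - v y)) UNIV" for x s and v :: "'a \<Rightarrow> real"
  define Box where "Box = {v :: 'a \<Rightarrow> real. (\<forall>y. y \<notin> D \<longrightarrow> v y = 0) \<and> (\<forall>y. 0 \<le> v y \<and> v y \<le> 1)}"
  have LG: "Lsum v x = G x (v x) v" for v x unfolding Lsum_phi G_def ..
  have Gfin: "G x s v = (\<Sum>y\<in>D. b x y * phi (s - v y)) + tD D x * phi s" if "v \<in> Box" for x s v
    using sum_outside(2)[OF D, of "\<lambda>y. phi (s - v y)" "phi s" x] that by (simp add: Box_def G_def)
  have Gsum: "(\<lambda>y. b x y * phi (s - v y)) summable_on UNIV" if "v \<in> Box" for x s v
    by (rule summable_phi_s[where C = 1]) (use that in \<open>auto simp: Box_def abs_le_iff\<close>)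
  have Gcont: "continuous_on {0..1} (\<lambda>s. G x s v)" if "v \<in> Box" for x v
  proof -
    have "continuous_on {0..1} (\<lambda>s. (\<Sum>y\<in>D. b x y * phi (s - v y)) + tD D x * phi s)"
      by (intro continuous_at_imp_continuous_on ballI continuous_intros continuous_within_compose3[OF phi_isCont])
    then show ?thesis using Gfin[OF that] by simp
  qed
  have G01: "G x 0 v \<le> 0 \<and> 0 \<le> G x 1 v" if "v \<in> Box" for x v
  proof
    have "b x y * phi (0 - v y) \<le> 0" for y
    proof -
      have "phi (0 - v y) \<le> phi 0" using that by (intro phi_mono) (auto simp: Box_def)
      then show ?thesis using bnn[of x y] by (simp add: mult_nonneg_nonpos)
    qed
    then have "(\<Sum>y\<in>D. b x y * phi (0 - v y)) \<le> 0" by (intro sum_nonpos) 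
    then show "G x 0 v \<le> 0" using Gfin[OF that] by simp
    have "0 \<le> b x y * phi (1 - v y)" for y
    proof -
      have "phi 0 \<le> phi (1 - v y)" using that by (intro phi_mono) (auto simp: Box_def)
      then show ?thesis using bnn[of x y] by simp
    qed
    then have "0 \<le> (\<Sum>y\<in>D. b x y * phi (1 - v y))" by (intro sum_nonneg)
    moreover have "0 \<le> tD D x * phi 1" using tD_nonneg phi_mono[of 0 1] by simp
    ultimately show "0 \<le> G x 1 v" using Gfin[OF that] by simp
  qed
  have Gstrict: "G x s v < G x s' v" if "v \<in> Box" "s < s'" for x s s' v
  proof -
    obtain y0 where y0: "0 < b x y0" using has_neighbor by blast
    show ?thesis unfolding G_def
    proof (rule strict_infsum[OF Gsum[OF that(1)] Gsum[OF that(1)]])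
      show "b x y * phi (s - v y) \<le> b x y * phi (s' - v y)" for y
        using that bnn by (intro mult_left_mono phi_mono) auto
      show "b x y0 * phi (s - v y0) < b x y0 * phi (s' - v y0)"
        using that y0 by (intro mult_strict_left_mono phi_strict_mono) auto
    qed
  qed
  have Ganti: "G x s w \<le> G x s v" if "v \<in> Box" "w \<in> Box" "\<And>y. v y \<le> w y" for x s v w
    unfolding G_def
  proof (rule infsum_mono[OF Gsum[OF that(2)] Gsum[OF that(1)]])
    fix y show "b x y * phi (s - w y) \<le> b x y * phi (s - v y)"
      using that(3)[of y] bnn[of x y] by (intro mult_left_mono phi_mono) auto
  qed
  define T where "T v x = (if x \<in> A then (SOME s. 0 \<le> s \<and> s \<le> 1 \<and> G x s v = 0) else v x)" for v x
  have Tprop: "0 \<le> T v x \<and> T v x \<le> 1 \<and> G x (T v x) v = 0" if "v \<in> Box" "x \<in> A" for v x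
  proof -
    have "\<exists>s. 0 \<le> s \<and> s \<le> 1 \<and> G x s v = 0"
      using IVT'[of "\<lambda>s. G x s v" 0 0 1] G01[OF that(1)] Gcont[OF that(1)] by auto
    then have "0 \<le> (SOME s. 0 \<le> s \<and> s \<le> 1 \<and> G x s v = 0) \<and> (SOME s. 0 \<le> s \<and> s \<le> 1 \<and> G x s v = 0) \<le> 1
       \<and> G x (SOME s. 0 \<le> s \<and> s \<le> 1 \<and> G x s v = 0) v = 0"
      by (rule someI_ex)
    then show ?thesis unfolding T_def using that(2) by simp
  qed
  have Toff: "T v y = v y" if "y \<notin> A" for v y using that by (simp add: T_def)
  have Tbox: "T v \<in> Box" if "v \<in> Box" for v
    unfolding Box_def
  proof (intro CollectI conjI allI impI)
    fix y
    assume yD: "y \<notin> D"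
    then have "y \<notin> A" using AD by blast
    then show "T v y = 0" using that yD by (simp add: Toff Box_def)
  next
    fix y
    show "0 \<le> T v y" "T v y \<le> 1"
      using that Tprop[OF that, of y] by (cases "y \<in> A"; simp add: Box_def Toff)+
  qed
  have Tmono: "T v y \<le> T w y" if "v \<in> Box" "w \<in> Box" "\<And>y. v y \<le> w y" for v w y
  proof (cases "y \<in> A")
    case True
    show ?thesis
    proof (rule ccontr)
      assume "\<not> T v y \<le> T w y"
      then have "G y (T w y) v < G y (T v y) v" using Gstrict[OF that(1)] by simp
      moreover have "G y (T w y) w \<le> G y (T w y) v" using Ganti[OF that] .
      ultimately show False using Tprop[OF that(1) True] Tprop[OF that(2) True] by simp
    qed
  next
    case False then show ?thesis using that by (simp add: Toff)
  qed
  have v0box: "v0 \<in> Box" using v0D v0b by (simp add: Box_def)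
  have Tv0: "v0 y \<le> T v0 y" for y
  proof (cases "y \<in> A")
    case True
    show ?thesis
    proof (rule ccontr)
      assume "\<not> v0 y \<le> T v0 y"
      then have "G y (T v0 y) v0 < G y (v0 y) v0" using Gstrict[OF v0box] by simp
      then show False using Tprop[OF v0box True] v0sub[OF True] LG[of v0 y] by simp
    qed
  next
    case False then show ?thesis by (simp add: Toff)
  qed
  define V where "V k = (T ^^ k) v0" for k
  have Vbox: "V k \<in> Box" for k by (induction k) (simp_all add: V_def v0box Tbox)
  have Vsuc: "V (Suc k) = T (V k)" for k by (simp add: V_def)
  have Vinc: "V k y \<le> V (Suc k) y" for k y
  proof (induction k arbitrary: y)
    case 0 then show ?case using Tv0 by (simp add: V_def)
  next
    case (Suc k)
    show ?case unfolding Vsuc[of "Suc k"] Vsuc[of k] 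
      by (rule Tmono[OF Vbox[of k] Tbox[OF Vbox[of k]]]) (use Suc Vsuc in simp)
  qed
  have incs: "incseq (\<lambda>k. V k y)" for y by (rule incseq_SucI) (rule Vinc)
  have Vge: "v0 y \<le> V k y" for k y
  proof (induction k)
    case 0 then show ?case by (simp add: V_def)
  next
    case (Suc k) then show ?case using Vinc[of k y] by simp
  qed
  have Vle: "V k y \<le> 1" for k y using Vbox[of k] by (simp add: Box_def)
  have Voff: "V k y = v0 y" if "y \<notin> A" for k y
    by (induction k) (simp_all add: V_def Toff that)
  define v where "v y = lim (\<lambda>k. V k y)" for y
  have Vlim: "(\<lambda>k. V k y) \<longlonglongrightarrow> v y" for y
  proof -
    obtain L where "(\<lambda>k. V k y) \<longlonglongrightarrow> L" using incseq_convergent[OF incs[of y], of 1] Vle by blast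
    then show ?thesis unfolding v_def by (simp add: limI)
  qed
  have vb: "v0 y \<le> v y \<and> v y \<le> 1" for y
    using LIMSEQ_le_const[OF Vlim, of "v0 y"] LIMSEQ_le_const2[OF Vlim, of y 1] Vge Vle by auto
  have voff: "v y = v0 y" if "y \<notin> A" for y
  proof -
    have "(\<lambda>k. V k y) = (\<lambda>k. v0 y)" using Voff[OF that] by simp
    then show ?thesis using Vlim[of y] by (simp add: LIMSEQ_const_iff)
  qed
  have vbox: "v \<in> Box" unfolding Box_def
  proof (intro CollectI conjI allI impI)
    fix y
    assume yD: "y \<notin> D"
    then have "y \<notin> A" using AD by blast
    then show "v y = 0" using voff v0D yD by simp
  next
    fix y
    show "0 \<le> v y" using vb[of y] v0b[of y] by linarith
    show "v y \<le> 1" using vb[of y] by simp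
  qed
  have harm: "Lsum v x = 0" if "x \<in> A" for x
  proof -
    have G0: "G x (V (Suc k) x) (V k) = 0" for k using Tprop[OF Vbox[of k] that] Vsuc by simp
    have z: "(\<Sum>y\<in>D. b x y * phi (V (Suc k) x - V k y)) + tD D x * phi (V (Suc k) x) = 0" for k
      using Gfin[OF Vbox[of k], of x "V (Suc k) x"] G0[of k] by simp
    have "(\<lambda>k. (\<Sum>y\<in>D. b x y * phi (V (Suc k) x - V k y)) + tD D x * phi (V (Suc k) x))
          \<longlonglongrightarrow> (\<Sum>y\<in>D. b x y * phi (v x - v y)) + tD D x * phi (v x)"
      by (intro tendsto_intros isCont_tendsto_compose[OF phi_isCont] LIMSEQ_Suc Vlim)
    then have "(\<Sum>y\<in>D. b x y * phi (v x - v y)) + tD D x * phi (v x) = 0"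
      using z LIMSEQ_unique[OF _ tendsto_const] by simp
    then show ?thesis using LG[of v x] Gfin[OF vbox] by simp
  qed
  show ?thesis using voff vb harm by blast
qed


end

lemma infsum_as_integral:
  fixes g :: "'a \<Rightarrow> real"
  assumes "\<beta> summable_on UNIV" "\<And>y. \<bar>g y\<bar> \<le> \<beta> y"
  shows "infsum g UNIV = integral\<^sup>L (count_space UNIV) g"
    and "integrable (count_space UNIV) g"
proof -
  have "(\<lambda>y. norm (g y)) summable_on UNIV"
    by (rule summable_on_comparison_test[OF assms(1)]) (use assms(2) in auto)
  then have "Infinite_Set_Sum.abs_summable_on g UNIV" using abs_summable_equivalent by blast
  then show "infsum g UNIV = integral\<^sup>L (count_space UNIV) g"
    and "integrable (count_space UNIV) g"
    using infsetsum_infsum[of g UNIV] unfolding infsetsum_def Infinite_Set_Sum.abs_summable_on_def by auto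
qed

lemma infsum_dominated:
  fixes a :: "nat \<Rightarrow> 'a \<Rightarrow> real"
  assumes bs: "\<beta> summable_on UNIV" and bd: "\<And>n y. \<bar>a n y\<bar> \<le> \<beta> y"
    and lim: "\<And>y. (\<lambda>n. a n y) \<longlonglongrightarrow> a' y"
  shows "(\<lambda>n. infsum (a n) UNIV) \<longlonglongrightarrow> infsum a' UNIV"
proof -
  have bd': "\<bar>a' y\<bar> \<le> \<beta> y" for y
    using LIMSEQ_le_const2[OF tendsto_rabs[OF lim[of y]], of "\<beta> y"] bd by auto
  have bnn': "\<bar>\<beta> y\<bar> \<le> \<beta> y" for y using bd[of 0 y] by auto
  have I: "integrable (count_space UNIV) \<beta>" using infsum_as_integral(2)[OF bs bnn'] .
  have "(\<lambda>n. integral\<^sup>L (count_space UNIV) (a n)) \<longlonglongrightarrow> integral\<^sup>L (count_space UNIV) a'"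
    by (rule integral_dominated_convergence[where w = \<beta>]) (use I lim bd in auto)
  then show ?thesis using infsum_as_integral(1)[OF bs bd] infsum_as_integral(1)[OF bs bd'] by simp
qed

context wg begin

lemma path_control:
  assumes "(\<lambda>u v. 0 < b u v)\<^sup>*\<^sup>* x y"
  shows "\<forall>\<eta>>0. \<exists>\<delta>>0. \<forall>f::'a\<Rightarrow>real. (\<forall>w w'. b w w' * \<bar>f w - f w'\<bar> powr p \<le> \<delta>) \<longrightarrow> \<bar>f x - f y\<bar> \<le> \<eta>"
  using assms
proof (induction rule: rtranclp_induct)
  case base
  then show ?case by (auto intro!: exI[of _ 1])
next
  case (step y z)
  show ?case
  proof (intro allI impI)
    fix \<eta> :: real assume "\<eta> > 0"
    then obtain \<delta>1 where d1: "\<delta>1 > 0"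
      "\<And>f::'a\<Rightarrow>real. (\<forall>w w'. b w w' * \<bar>f w - f w'\<bar> powr p \<le> \<delta>1) \<Longrightarrow> \<bar>f x - f y\<bar> \<le> \<eta>/2"
      using step.IH by (meson half_gt_zero)
    define \<delta>2 where "\<delta>2 = b y z * (\<eta>/2) powr p"
    have d2: "\<delta>2 > 0" using step.hyps(2) \<open>\<eta> > 0\<close> by (simp add: \<delta>2_def)
    show "\<exists>\<delta>>0. \<forall>f::'a\<Rightarrow>real. (\<forall>w w'. b w w' * \<bar>f w - f w'\<bar> powr p \<le> \<delta>) \<longrightarrow> \<bar>f x - f z\<bar> \<le> \<eta>"
    proof (intro exI[of _ "min \<delta>1 \<delta>2"] conjI allI impI)
      show "0 < min \<delta>1 \<delta>2" using d1 d2 by simp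
      fix f :: "'a \<Rightarrow> real" assume H: "\<forall>w w'. b w w' * \<bar>f w - f w'\<bar> powr p \<le> min \<delta>1 \<delta>2"
      have "\<bar>f x - f y\<bar> \<le> \<eta>/2" using H by (intro d1(2)) (meson min.boundedE order_trans)
      moreover have "\<bar>f y - f z\<bar> \<le> \<eta>/2"
      proof (rule ccontr)
        assume "\<not> \<bar>f y - f z\<bar> \<le> \<eta>/2"
        then have "(\<eta>/2) powr p < \<bar>f y - f z\<bar> powr p"
          using \<open>\<eta> > 0\<close> p1 by (intro powr_less_mono2) auto
        then have "\<delta>2 < b y z * \<bar>f y - f z\<bar> powr p"
          unfolding \<delta>2_def using step.hyps(2) by simp
        moreover have "b y z * \<bar>f y - f z\<bar> powr p \<le> \<delta>2" using H by (meson min.boundedE)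
        ultimately show False by simp
      qed
      ultimately show "\<bar>f x - f z\<bar> \<le> \<eta>" by linarith
    qed
  qed
qed

lemma comparison:
  fixes u h :: "'a \<Rightarrow> real"
  assumes A: "finite A"
    and su: "\<And>x. x \<in> A \<Longrightarrow> (\<lambda>y. b x y * phi (u x - u y)) summable_on UNIV"
    and sh: "\<And>x. x \<in> A \<Longrightarrow> (\<lambda>y. b x y * phi (h x - h y)) summable_on UNIV"
    and L: "\<And>x. x \<in> A \<Longrightarrow> Lsum u x \<le> Lsum h x"
    and bdry: "\<And>x y. x \<in> A \<Longrightarrow> 0 < b x y \<Longrightarrow> y \<notin> A \<Longrightarrow> u y \<le> h y"
    and xA: "x \<in> A"
  shows "u x \<le> h x"
proof (rule ccontr)
  assume "\<not> u x \<le> h x"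
  define \<delta> where "\<delta> = Max ((\<lambda>x. u x - h x) ` A)"
  have dge: "u y - h y \<le> \<delta>" if "y \<in> A" for y unfolding \<delta>_def using A that by simp
  have dpos: "\<delta> > 0" using dge[OF xA] \<open>\<not> u x \<le> h x\<close> by simp
  have "\<delta> \<in> (\<lambda>x. u x - h x) ` A"
    unfolding \<delta>_def using A xA by (intro Max_in) auto
  then obtain x1 where x1: "x1 \<in> A" "u x1 - h x1 = \<delta>" by auto
  define P where "P = {x \<in> A. u x - h x = \<delta>}"
  have clos: "y \<in> P" if "x' \<in> P" "0 < b x' y" for x' y
  proof -
    have x'A: "x' \<in> A" and x'd: "u x' - h x' = \<delta>" using that(1) by (auto simp: P_def)
    have le: "u y' - h y' \<le> \<delta>" if "0 < b x' y'" for y'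
    proof (cases "y' \<in> A")
      case True then show ?thesis by (rule dge)
    next
      case False then show ?thesis using bdry[OF x'A that False] dpos by simp
    qed
    have mono: "b x' y' * phi (h x' - h y') \<le> b x' y' * phi (u x' - u y')" for y'
    proof (cases "0 < b x' y'")
      case True
      then have "h x' - h y' \<le> u x' - u y'" using le[OF True] x'd by simp
      then show ?thesis using True by (intro mult_left_mono phi_mono) auto
    next
      case False then have "b x' y' = 0" using bnn[of x' y'] by simp
      then show ?thesis by simp
    qed
    have "u y - h y = \<delta>"
    proof (rule ccontr)
      assume "u y - h y \<noteq> \<delta>"
      then have "u y - h y < \<delta>" using le[OF that(2)] by simp
      then have "h x' - h y < u x' - u y" using x'd by simp
      then have "b x' y * phi (h x' - h y) < b x' y * phi (u x' - u y)"
        using that(2) by (intro mult_strict_left_mono phi_strict_mono) auto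
      then have "Lsum h x' < Lsum u x'"
        unfolding Lsum_phi by (rule strict_infsum[OF sh[OF x'A] su[OF x'A] mono])
      then show False using L[OF x'A] by simp
    qed
    moreover have "y \<in> A"
    proof (rule ccontr)
      assume "y \<notin> A"
      then have "u y \<le> h y" using bdry[OF x'A that(2)] by simp
      then show False using \<open>u y - h y = \<delta>\<close> dpos by simp
    qed
    ultimately show ?thesis by (simp add: P_def)
  qed
  obtain w where "w \<notin> A" using A infX by (metis ex_new_if_finite)
  then have "w \<notin> P" by (simp add: P_def)
  moreover have "x1 \<in> P" using x1 by (simp add: P_def)
  ultimately obtain u' v' where "0 < b u' v'" "u' \<in> P" "v' \<notin> P"
    using cross_edge[of "\<lambda>u v. 0 < b u v" x1 w "\<lambda>v. v \<in> P", OF conn] by blast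
  then show False using clos by blast
qed


lemma Lsum_nonpos_at_zero:
  assumes D: "finite D" and supp: "\<And>y. y \<notin> D \<Longrightarrow> v y = 0"
    and nn: "\<And>y. 0 \<le> v y" and vx: "v x = 0"
  shows "Lsum v x \<le> 0"
proof -
  have "b x y * phi (v x - v y) \<le> 0" for y
  proof -
    have "phi (v x - v y) \<le> phi 0" using nn[of y] vx by (intro phi_mono) auto
    then show ?thesis using bnn[of x y] by (simp add: mult_nonneg_nonpos)
  qed
  then have "(\<Sum>y\<in>D. b x y * phi (v x - v y)) \<le> 0" by (intro sum_nonpos)
  then show ?thesis using Lsum_LD(1)[OF D supp] vx by (simp add: LD_def)
qed

lemma Lsum_nonneg_at_one:
  assumes D: "finite D" and supp: "\<And>y. y \<notin> D \<Longrightarrow> v y = 0"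
    and le1: "\<And>y. v y \<le> 1" and vx: "v x = 1"
  shows "0 \<le> Lsum v x"
proof -
  have "0 \<le> b x y * phi (v x - v y)" for y
  proof -
    have "phi 0 \<le> phi (v x - v y)" using le1[of y] vx by (intro phi_mono) auto
    then show ?thesis using bnn[of x y] by simp
  qed
  then have "0 \<le> (\<Sum>y\<in>D. b x y * phi (v x - v y))" by (intro sum_nonneg)
  moreover have "0 \<le> tD D x * phi (v x)" using vx tD_nonneg phi_mono[of 0 1] by simp
  ultimately show ?thesis using Lsum_LD(1)[OF D supp] by (simp add: LD_def)
qed

lemma Lsum_affine:
  assumes "0 \<le> c"
  shows "Lsum (\<lambda>y. M + c * (1 - f y)) x = - (c powr (p - 1)) * Lsum f x"
proof -
  have "b x y * phi ((M + c * (1 - f x)) - (M + c * (1 - f y))) = - (c powr (p - 1)) * (b x y * phi (f x - f y))" for y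
  proof -
    have "(M + c * (1 - f x)) - (M + c * (1 - f y)) = c * (f y - f x)" by (simp add: algebra_simps)
    then show ?thesis using phi_scale[OF assms, of "f y - f x"] phi_swap[of "f y" "f x"] by simp
  qed
  then have "Lsum (\<lambda>y. M + c * (1 - f y)) x = infsum (\<lambda>y. - (c powr (p - 1)) * (b x y * phi (f x - f y))) UNIV"
    unfolding Lsum_phi by simp
  also have "\<dots> = - (c powr (p - 1)) * infsum (\<lambda>y. b x y * phi (f x - f y)) UNIV"
    by (rule infsum_cmult_right')
  finally show ?thesis unfolding Lsum_phi .
qed

lemma Lsum_uminus: "Lsum (\<lambda>y. - f y) x = - Lsum f x"
proof -
  have "b x y * phi (- f x - - f y) = - (b x y * phi (f x - f y))" for y
    using phi_neg[of "f x - f y"] by simp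
  then show ?thesis unfolding Lsum_phi by (simp add: infsum_uminus)
qed

lemma summable_from_Fp:
  assumes "(\<lambda>y. b x y * \<bar>u x - u y\<bar> powr (p - 1)) summable_on UNIV"
  shows "(\<lambda>y. b x y * phi (u x - u y)) summable_on UNIV"
proof -
  have "(\<lambda>y. norm (b x y * phi (u x - u y))) = (\<lambda>y. b x y * \<bar>u x - u y\<bar> powr (p - 1))"
    by (auto simp: abs_mult phi_abs bnn abs_of_nonneg)
  then show ?thesis using assms summable_on_iff_abs_summable_on_real by metis
qed

lemma dir1:
  assumes par: "p_parabolic b (\<lambda>x. 0) p"
    and mpos: "\<And>x. 0 < m x"
    and Ebnd: "edge_boundary b V \<noteq> {}"
    and bnd: "bounded (u ` (V \<union> edge_boundary b V))"
    and Fpu: "u \<in> Fp b p V"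
    and lap: "\<forall>x\<in>V. p_laplacian b m p u x \<le> 0"
  shows "Sup (u ` (V \<union> edge_boundary b V)) = Sup (u ` edge_boundary b V)"
proof -
  define E where "E = edge_boundary b V"
  define W where "W = V \<union> E"
  define S where "S = Sup (u ` W)"
  define M where "M = Sup (u ` E)"
  have bddW: "bdd_above (u ` W)" using bnd by (simp add: W_def E_def bounded_imp_bdd_above)
  have bddE: "bdd_above (u ` E)" using bddW by (rule bdd_above_mono) (auto simp: W_def)
  have uS: "u x \<le> S" if "x \<in> W" for x unfolding S_def using bddW that by (simp add: cSup_upper)
  have uM: "u x \<le> M" if "x \<in> E" for x unfolding M_def using bddE that by (simp add: cSup_upper)
  have MS: "M \<le> S" unfolding M_def S_def using Ebnd bddW by (intro cSup_subset_mono) (auto simp: W_def E_def)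
  have zV: "z \<notin> V" if "z \<in> E" for z using that by (simp add: E_def edge_boundary_def)
  obtain z where zE: "z \<in> E" using Ebnd by (auto simp: E_def)
  have Lu: "Lsum u x \<le> 0" if "x \<in> V" for x
  proof -
    have "(1 / m x) * Lsum u x \<le> 0" using lap that by (simp add: p_laplacian_def Lsum_def)
    show ?thesis
    proof (rule ccontr)
      assume "\<not> Lsum u x \<le> 0"
      then have "0 < (1 / m x) * Lsum u x" using mpos[of x] by (intro mult_pos_pos) auto
      then show False using \<open>(1 / m x) * Lsum u x \<le> 0\<close> by linarith
    qed
  qed
  have key: "u x0 \<le> M" if x0V: "x0 \<in> V" for x0
  proof (rule field_le_epsilon)
    fix e :: real assume "0 < e"
    define \<eta> where "\<eta> = e / (S - M + 1)"
    have etapos: "\<eta> > 0" using \<open>0 < e\<close> MS by (simp add: \<eta>_def)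
    have etae: "(S - M) * \<eta> \<le> e"
    proof -
      have "(S - M) * \<eta> = e * ((S - M) / (S - M + 1))" by (simp add: \<eta>_def)
      also have "\<dots> \<le> e * 1" using MS \<open>0 < e\<close> by (intro mult_left_mono) auto
      finally show ?thesis by simp
    qed
    obtain \<delta> where dpos: "\<delta> > 0"
      and dprop': "\<forall>f::'a\<Rightarrow>real. (\<forall>w w'. b w w' * \<bar>f w - f w'\<bar> powr p \<le> \<delta>) \<longrightarrow> \<bar>f z - f x0\<bar> \<le> \<eta>"
      using path_control[OF conn[of z x0], rule_format, OF etapos] by blast
    define Set where "Set = {energy b (\<lambda>x. 0) p \<phi> | \<phi>. finite {x. \<phi> x \<noteq> 0} \<and> (\<forall>x\<in>{z}. 1 \<le> \<phi> x)}"
    have "Inf Set = 0" using par[unfolded p_parabolic_def, rule_format, of "{z}"] unfolding Set_def by simp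
    moreover have "Set \<noteq> {}"
    proof -
      have "energy b (\<lambda>x. 0) p (\<lambda>x. if x = z then 1 else 0::real) \<in> Set"
        unfolding Set_def by (rule CollectI, rule exI[of _ "\<lambda>x. if x = z then 1 else 0::real"]) simp
      then show ?thesis by auto
    qed
    ultimately obtain en where "en \<in> Set" "en < \<delta>" using cInf_lessD[of Set \<delta>] dpos by auto
    then obtain \<psi> where psifin: "finite {x. \<psi> x \<noteq> 0}" and psiz: "1 \<le> \<psi> z"
      and psiE: "energy b (\<lambda>x. 0) p \<psi> < \<delta>" unfolding Set_def by auto
    define D where "D = {x. \<psi> x \<noteq> 0} \<union> {z}"
    have Dfin: "finite D" using psifin by (simp add: D_def)
    have zD: "z \<in> D" by (simp add: D_def)
    have psiD: "\<And>y. y \<notin> D \<Longrightarrow> \<psi> y = 0" by (auto simp: D_def)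
    define v0 where "v0 = (\<lambda>x. if x = z then 1 else 0::real)"
    define A where "A = D - {z}"
    have v0D: "\<And>y. y \<notin> D \<Longrightarrow> v0 y = 0" by (auto simp: v0_def D_def)
    have v0b: "\<And>y. 0 \<le> v0 y \<and> v0 y \<le> 1" by (simp add: v0_def)
    have AsubD: "A \<subseteq> D" by (auto simp: A_def)
    have v0sub: "\<And>x. x \<in> A \<Longrightarrow> Lsum v0 x \<le> 0"
      by (rule Lsum_nonpos_at_zero[OF Dfin v0D]) (auto simp: v0_def A_def)
    obtain f where foff: "\<forall>y. y \<notin> A \<longrightarrow> f y = v0 y" and fb: "\<forall>y. v0 y \<le> f y \<and> f y \<le> 1"
      and fharm: "\<forall>x\<in>A. Lsum f x = 0"
      using dirichlet[OF Dfin AsubD v0D v0b v0sub] by blast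
    have fD: "\<And>y. y \<notin> D \<Longrightarrow> f y = 0" using foff v0D by (auto simp: A_def)
    have fz: "f z = 1" using foff by (simp add: A_def v0_def)
    have f01: "0 \<le> f y \<and> f y \<le> 1" for y
    proof -
      have "v0 y \<le> f y" "f y \<le> 1" using fb by auto
      then show ?thesis using v0b[of y] by linarith
    qed
    have "energy b (\<lambda>x. 0) p f \<le> energy b (\<lambda>x. 0) p \<psi>"
    proof -
      have "0 \<le> (\<Sum>x\<in>D. (\<psi> x - f x) * LD D f x)"
      proof -
        have eq: "(\<Sum>x\<in>D. (\<psi> x - f x) * LD D f x) = (\<psi> z - f z) * LD D f z + (\<Sum>x\<in>A. (\<psi> x - f x) * LD D f x)"
          using sum.remove[OF Dfin zD, of "\<lambda>x. (\<psi> x - f x) * LD D f x"] by (simp add: A_def)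
        have s0: "(\<Sum>x\<in>A. (\<psi> x - f x) * LD D f x) = 0"
          using fharm Lsum_LD(1)[OF Dfin fD] by simp
        have "0 \<le> LD D f z"
          using Lsum_nonneg_at_one[of D f z, OF Dfin fD _ fz] f01 Lsum_LD(1)[OF Dfin fD] by simp
        then have "0 \<le> (\<psi> z - f z) * LD D f z" using psiz fz by simp
        then show ?thesis using eq s0 by simp
      qed
      then have "0 \<le> p * (\<Sum>x\<in>D. (\<psi> x - f x) * LD D f x)" using p1 by simp
      then have "ED D f \<le> ED D \<psi>" using ED_min[OF Dfin, of f \<psi>] by linarith
      then show ?thesis using energy_ED[OF Dfin fD] energy_ED[OF Dfin psiD] by simp
    qed
    then have "\<forall>w w'. b w w' * \<bar>f w - f w'\<bar> powr p \<le> \<delta>"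
    proof (intro allI)
      fix w w' assume "energy b (\<lambda>x. 0) p f \<le> energy b (\<lambda>x. 0) p \<psi>"
      then show "b w w' * \<bar>f w - f w'\<bar> powr p \<le> \<delta>"
        using pair_bound[where D=D and f=f and w=w and w'=w', OF Dfin fD] psiE by linarith
    qed
    then have "\<bar>f z - f x0\<bar> \<le> \<eta>" using dprop' by blast
    then have fx0: "1 - \<eta> \<le> f x0" using fz by simp
    define h where "h = (\<lambda>y. M + (S - M) * (1 - f y))"
    have Lh: "Lsum h x = - ((S - M) powr (p - 1)) * Lsum f x" for x
      unfolding h_def using MS by (intro Lsum_affine) simp
    have ux0: "u x0 \<le> h x0"
    proof (cases "x0 \<in> D")
      case False
      then have "f x0 = 0" by (rule fD)
      then show ?thesis using uS[of x0] x0V by (simp add: h_def W_def)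
    next
      case True
      define A' where "A' = V \<inter> D"
      have A'A: "A' \<subseteq> A" using zE zV by (auto simp: A'_def A_def)
      have hb: "\<bar>h y\<bar> \<le> \<bar>M\<bar> + (S - M)" for y
      proof -
        have "0 \<le> (S - M) * (1 - f y)" "(S - M) * (1 - f y) \<le> S - M"
          using MS f01[of y] by (auto simp: mult_left_le)
        then show ?thesis unfolding h_def by linarith
      qed
      show ?thesis
      proof (rule comparison[of A' u h x0])
        show "finite A'" using Dfin by (simp add: A'_def)
        show "x0 \<in> A'" using True x0V by (simp add: A'_def)
        fix x assume xA': "x \<in> A'"
        then have xV: "x \<in> V" by (simp add: A'_def)
        show "(\<lambda>y. b x y * phi (u x - u y)) summable_on UNIV"
          using Fpu xV by (intro summable_from_Fp) (simp add: Fp_def)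
        show "(\<lambda>y. b x y * phi (h x - h y)) summable_on UNIV"
          by (rule summable_phi_bdd[OF hb])
        have "Lsum h x = 0" using Lh[of x] fharm A'A xA' by auto
        then show "Lsum u x \<le> Lsum h x" using Lu[OF xV] by simp
        fix y assume bxy: "0 < b x y" and yA': "y \<notin> A'"
        show "u y \<le> h y"
        proof (cases "y \<in> V")
          case True
          then have "y \<notin> D" using yA' by (simp add: A'_def)
          then have "h y = S" using fD by (simp add: h_def)
          then show ?thesis using uS[of y] True by (simp add: W_def)
        next
          case False
          then have "y \<in> E" using xV bxy bsym[of x y] by (auto simp: E_def edge_boundary_def)
          then have "u y \<le> M" by (rule uM)
          moreover have "M \<le> h y" using MS f01[of y] by (simp add: h_def)
          ultimately show ?thesis by simp
        qed
      qed
    qed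
    also have "h x0 \<le> M + (S - M) * \<eta>"
      unfolding h_def using MS fx0 by (intro add_left_mono mult_left_mono) auto
    also have "\<dots> \<le> M + e" using etae by simp
    finally show "u x0 \<le> M + e" .
  qed
  have "S \<le> M" unfolding S_def
  proof (rule cSup_least)
    show "u ` W \<noteq> {}" using zE by (auto simp: W_def)
    fix y assume "y \<in> u ` W"
    then obtain x where "x \<in> W" "y = u x" by auto
    then show "y \<le> M" using key uM by (auto simp: W_def)
  qed
  then show ?thesis using MS by (simp add: S_def M_def W_def E_def)
qed


lemma energy_nonneg: "0 \<le> energy b (\<lambda>x. 0) p \<phi>"
  unfolding energy_def by (auto intro!: infsum_nonneg simp: bnn)

lemma dir2:
  assumes cntbl: "countable (UNIV :: 'a set)"
    and ii: "\<forall>V u. V \<noteq> UNIV \<longrightarrow> edge_boundary b V \<noteq> {} \<longrightarrow>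
       bounded (u ` (V \<union> edge_boundary b V)) \<longrightarrow>
       u \<in> Fp b p V \<longrightarrow>
       (\<forall>x\<in>V. p_laplacian b m p u x \<le> 0) \<longrightarrow>
       Sup (u ` (V \<union> edge_boundary b V)) = Sup (u ` edge_boundary b V)"
  shows "p_parabolic b (\<lambda>x. 0) p"
  unfolding p_parabolic_def
proof (intro allI impI)
  fix K :: "'a set" assume Kfin: "finite K"
  define Set where "Set = {energy b (\<lambda>x. 0) p \<phi> | \<phi>. finite {x. \<phi> x \<noteq> 0} \<and> (\<forall>x\<in>K. 1 \<le> \<phi> x)}"
  have inSet: "energy b (\<lambda>x. 0) p \<phi> \<in> Set" if "finite {x. \<phi> x \<noteq> 0}" "\<forall>x\<in>K. 1 \<le> \<phi> x" for \<phi>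
    unfolding Set_def using that by (intro CollectI exI[of _ \<phi>]) simp
  have ne: "Set \<noteq> {}"
  proof -
    have "finite {x. (\<lambda>x. if x \<in> K then 1 else 0::real) x \<noteq> 0}" using Kfin by simp
    then have "energy b (\<lambda>x. 0) p (\<lambda>x. if x \<in> K then 1 else 0::real) \<in> Set" by (intro inSet) auto
    then show ?thesis by auto
  qed
  have bdd: "bdd_below Set" unfolding Set_def bdd_below_def using energy_nonneg by blast
  have ge: "0 \<le> Inf Set"
    by (rule cInf_greatest[OF ne]) (auto simp: Set_def energy_nonneg)
  have le: "Inf Set \<le> 0"
  proof (cases "K = {}")
    case True
    have "energy b (\<lambda>x. 0) p (\<lambda>x. 0::real) \<in> Set" using True by (intro inSet) auto
    moreover have "energy b (\<lambda>x. 0) p (\<lambda>x. 0::real) = 0"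
    proof -
      have "(\<lambda>(x::'a, y::'a). 0::real) = (\<lambda>_. 0)" by auto
      then show ?thesis by (simp add: energy_def)
    qed
    ultimately show ?thesis using cInf_lower[OF _ bdd] by fastforce
  next
    case Kne: False
    obtain g :: "'a \<Rightarrow> nat" where ginj: "inj g" using countableE[OF cntbl] by blast
    define Bn where "Bn n = K \<union> {x. g x < n}" for n
    have Bfin: "finite (Bn n)" for n
    proof -
      have "{x. g x < n} = g -` {..<n}" by auto
      then have "finite {x. g x < n}" using finite_vimageI[OF _ ginj, of "{..<n}"] by simp
      then show ?thesis using Kfin by (simp add: Bn_def)
    qed
    have KB: "K \<subseteq> Bn n" for n by (simp add: Bn_def)
    have Bmono: "Bn n \<subseteq> Bn (Suc n)" for n by (auto simp: Bn_def)
    define v0 where "v0 = (\<lambda>x. if x \<in> K then 1 else 0::real)"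
    define good where "good n w \<longleftrightarrow> (\<forall>y. y \<notin> Bn n \<longrightarrow> w y = 0) \<and> (\<forall>y. 0 \<le> w y \<and> w y \<le> 1) \<and> (\<forall>y\<in>K. w y = 1)
        \<and> (\<forall>x\<in>Bn n - K. Lsum w x = 0)" for n and w :: "'a \<Rightarrow> real"
    define P where "P n w v \<longleftrightarrow> (\<forall>y. y \<notin> Bn n - K \<longrightarrow> v y = w y) \<and> (\<forall>y. w y \<le> v y \<and> v y \<le> 1) \<and> (\<forall>x\<in>Bn n - K. Lsum v x = 0)"
      for n and w v :: "'a \<Rightarrow> real"
    define step where "step n w = (SOME v. P n w v)" for n w
    have stepok: "good n (step n w) \<and> (\<forall>y. w y \<le> step n w y)"
      if w1: "\<forall>y. y \<notin> Bn n \<longrightarrow> w y = 0" and w2: "\<forall>y. 0 \<le> w y \<and> w y \<le> 1" and w3: "\<forall>y\<in>K. w y = 1"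
        and w4: "\<forall>x\<in>Bn n - K. Lsum w x \<le> 0" for n w
    proof -
      have "\<exists>v. P n w v" unfolding P_def
        by (rule dirichlet[OF Bfin[of n]]) (use w1 w2 w4 in auto)
      then have Pv: "P n w (step n w)" unfolding step_def by (rule someI_ex)
      show ?thesis
      proof (intro conjI)
        show "\<forall>y. w y \<le> step n w y" using Pv by (simp add: P_def)
        show "good n (step n w)" unfolding good_def
        proof (intro conjI allI impI ballI)
          fix y
          show "y \<notin> Bn n \<Longrightarrow> step n w y = 0" using Pv w1 by (auto simp: P_def)
          show "0 \<le> step n w y" using Pv w2[rule_format, of y] by (auto simp: P_def intro: order.trans)
          show "step n w y \<le> 1" using Pv by (simp add: P_def)
        next
          fix y assume "y \<in> K" then show "step n w y = 1" using Pv w3 by (auto simp: P_def)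
        next
          fix x assume "x \<in> Bn n - K" then show "Lsum (step n w) x = 0" using Pv by (auto simp: P_def)
        qed
      qed
    qed
    define F where "F = rec_nat (step 0 v0) (\<lambda>n w. step (Suc n) w)"
    have F0: "F 0 = step 0 v0" by (simp add: F_def)
    have FS: "F (Suc n) = step (Suc n) (F n)" for n by (simp add: F_def)
    have Fgood: "good n (F n)" for n
    proof (induction n)
      case 0
      have "good 0 (step 0 v0) \<and> (\<forall>y. v0 y \<le> step 0 v0 y)"
      proof (rule stepok)
        show "\<forall>y. y \<notin> Bn 0 \<longrightarrow> v0 y = 0" by (auto simp: v0_def Bn_def)
        show "\<forall>y. 0 \<le> v0 y \<and> v0 y \<le> 1" by (simp add: v0_def)
        show "\<forall>y\<in>K. v0 y = 1" by (simp add: v0_def)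
        show "\<forall>x\<in>Bn 0 - K. Lsum v0 x \<le> 0"
          by (intro ballI Lsum_nonpos_at_zero[OF Kfin]) (auto simp: v0_def)
      qed
      then show ?case by (simp add: F0)
    next
      case (Suc n)
      have G: "\<forall>y. y \<notin> Bn n \<longrightarrow> F n y = 0" "\<forall>y. 0 \<le> F n y \<and> F n y \<le> 1" "\<forall>y\<in>K. F n y = 1"
          "\<forall>x\<in>Bn n - K. Lsum (F n) x = 0" using Suc by (simp_all add: good_def)
      have "good (Suc n) (step (Suc n) (F n)) \<and> (\<forall>y. F n y \<le> step (Suc n) (F n) y)"
      proof (rule stepok)
        show "\<forall>y. y \<notin> Bn (Suc n) \<longrightarrow> F n y = 0" using G(1) Bmono[of n] by blast
        show "\<forall>y. 0 \<le> F n y \<and> F n y \<le> 1" by (rule G(2))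
        show "\<forall>y\<in>K. F n y = 1" by (rule G(3))
        show "\<forall>x\<in>Bn (Suc n) - K. Lsum (F n) x \<le> 0"
        proof
          fix x assume x: "x \<in> Bn (Suc n) - K"
          show "Lsum (F n) x \<le> 0"
          proof (cases "x \<in> Bn n")
            case True then show ?thesis using G(4) x by simp
          next
            case False
            show ?thesis
              by (rule Lsum_nonpos_at_zero[OF Bfin[of n]]) (use G False in auto)
          qed
        qed
      qed
      then show ?case by (simp add: FS)
    qed
    have Fsupp: "\<And>y. y \<notin> Bn n \<Longrightarrow> F n y = 0" for n using Fgood[of n] by (simp add: good_def)
    have F01: "0 \<le> F n y \<and> F n y \<le> 1" for n y using Fgood[of n] by (simp add: good_def)
    have FK: "y \<in> K \<Longrightarrow> F n y = 1" for n y using Fgood[of n] by (simp add: good_def)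
    have Fharm: "x \<in> Bn n - K \<Longrightarrow> Lsum (F n) x = 0" for n x using Fgood[of n] by (simp add: good_def)
    have Fmono: "F n y \<le> F (Suc n) y" for n y
    proof -
      have G: "\<forall>y. y \<notin> Bn n \<longrightarrow> F n y = 0" "\<forall>y. 0 \<le> F n y \<and> F n y \<le> 1" "\<forall>y\<in>K. F n y = 1"
          "\<forall>x\<in>Bn n - K. Lsum (F n) x = 0" using Fgood[of n] by (simp_all add: good_def)
      have "\<forall>y. F n y \<le> step (Suc n) (F n) y"
      proof (rule stepok[THEN conjunct2])
        show "\<forall>y. y \<notin> Bn (Suc n) \<longrightarrow> F n y = 0" using G(1) Bmono[of n] by blast
        show "\<forall>y. 0 \<le> F n y \<and> F n y \<le> 1" by (rule G(2))
        show "\<forall>y\<in>K. F n y = 1" by (rule G(3))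
        show "\<forall>x\<in>Bn (Suc n) - K. Lsum (F n) x \<le> 0"
        proof
          fix x assume x: "x \<in> Bn (Suc n) - K"
          show "Lsum (F n) x \<le> 0"
          proof (cases "x \<in> Bn n")
            case True then show ?thesis using G(4) x by simp
          next
            case False
            show ?thesis
              by (rule Lsum_nonpos_at_zero[OF Bfin[of n]]) (use G False in auto)
          qed
        qed
      qed
      then show ?thesis by (simp add: FS)
    qed
    define f where "f y = lim (\<lambda>n. F n y)" for y
    have Flim: "(\<lambda>n. F n y) \<longlonglongrightarrow> f y" for y
    proof -
      have "incseq (\<lambda>n. F n y)" by (rule incseq_SucI) (rule Fmono)
      then obtain L where "(\<lambda>n. F n y) \<longlonglongrightarrow> L" using incseq_convergent[of "\<lambda>n. F n y" 1] F01 by blast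
      then show ?thesis unfolding f_def by (simp add: limI)
    qed
    have f01: "0 \<le> f y \<and> f y \<le> 1" for y
      using LIMSEQ_le_const[OF Flim, of 0 y] LIMSEQ_le_const2[OF Flim, of y 1] F01 by auto
    have fK: "f y = 1" if "y \<in> K" for y
    proof -
      have "(\<lambda>n. F n y) = (\<lambda>n. 1)" using FK[OF that] by simp
      then show ?thesis using Flim[of y] by (simp add: LIMSEQ_const_iff)
    qed
    have Ltend: "(\<lambda>n. Lsum (F n) x) \<longlonglongrightarrow> Lsum f x" for x
      unfolding Lsum_phi
    proof (rule infsum_dominated[where \<beta> = "\<lambda>y. b x y"])
      show "(\<lambda>y. b x y) summable_on UNIV" by (rule bsum)
      fix n y
      have "\<bar>F n x - F n y\<bar> \<le> 1" using F01[of n x] F01[of n y] by auto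
      then have "\<bar>phi (F n x - F n y)\<bar> \<le> 1" by (rule phi_bound)
      then show "\<bar>b x y * phi (F n x - F n y)\<bar> \<le> b x y"
        using bnn[of x y] by (simp add: abs_mult mult_left_le)
    next
      fix y
      show "(\<lambda>n. b x y * phi (F n x - F n y)) \<longlonglongrightarrow> b x y * phi (f x - f y)"
        by (intro tendsto_intros isCont_tendsto_compose[OF phi_isCont] Flim)
    qed
    have fharm: "Lsum f x = 0" if "x \<notin> K" for x
    proof -
      have "eventually (\<lambda>n. Lsum (F n) x = 0) sequentially"
        unfolding eventually_sequentially
      proof (intro exI allI impI)
        fix n assume "Suc (g x) \<le> n"
        then have "x \<in> Bn n - K" using that by (simp add: Bn_def)
        then show "Lsum (F n) x = 0" by (rule Fharm)
      qed
      then have "(\<lambda>n. Lsum (F n) x) \<longlonglongrightarrow> 0" by (rule tendsto_eventually)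
      then show ?thesis by (rule LIMSEQ_unique[OF Ltend[of x]])
    qed
    define u where "u = (\<lambda>y. - f y)"
    define E where "E = edge_boundary b (- K)"
    obtain k where kK: "k \<in> K" using Kne by blast
    obtain w where wK: "w \<notin> K" using Kfin infX by (metis ex_new_if_finite)
    obtain u' v' where uv: "0 < b u' v'" "u' \<in> K" "v' \<notin> K"
      using cross_edge[of "\<lambda>u v. 0 < b u v" k w "\<lambda>v. v \<in> K", OF conn kK wK] by blast
    have Ene: "E \<noteq> {}"
    proof -
      have "u' \<in> E" unfolding E_def edge_boundary_def using uv by auto
      then show ?thesis by auto
    qed
    have EK: "E \<subseteq> K" by (auto simp: E_def edge_boundary_def)
    have ubnd: "\<bar>u y\<bar> \<le> 1" for y using f01[of y] by (simp add: u_def)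
    have ubounded: "bounded (u ` (- K \<union> E))" unfolding bounded_real by (intro exI[of _ 1]) (auto simp: ubnd)
    have H: "- K \<noteq> UNIV \<longrightarrow> E \<noteq> {} \<longrightarrow> bounded (u ` (- K \<union> E)) \<longrightarrow> u \<in> Fp b p (- K) \<longrightarrow>
       (\<forall>x\<in>- K. p_laplacian b m p u x \<le> 0) \<longrightarrow> Sup (u ` (- K \<union> E)) = Sup (u ` E)"
      unfolding E_def by (rule spec[OF spec[OF ii, of "- K"], of u])
    have "Sup (u ` (- K \<union> E)) = Sup (u ` E)"
    proof (rule H[rule_format])
      show "- K \<noteq> UNIV" using Kne by auto
      show "E \<noteq> {}" by (rule Ene)
      show "bounded (u ` (- K \<union> E))" by (rule ubounded)
      show "u \<in> Fp b p (- K)" unfolding Fp_def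
      proof (intro CollectI ballI summable_bdd)
        fix x y
        have "\<bar>f x - f y\<bar> \<le> 1" using f01[of x] f01[of y] by auto
        then have "\<bar>phi (f x - f y)\<bar> \<le> 1" by (rule phi_bound)
        then show "\<bar>\<bar>u x - u y\<bar> powr (p - 1)\<bar> \<le> 1" by (simp add: u_def phi_abs abs_minus_commute)
      qed
      show "p_laplacian b m p u x \<le> 0" if "x \<in> - K" for x
      proof -
        have "Lsum u x = 0" using that using fharm Lsum_uminus[of f x] by (simp add: u_def)
        then show "p_laplacian b m p u x \<le> 0" by (simp add: p_laplacian_def Lsum_def)
      qed
    qed
    moreover have "u ` E = {-1}"
    proof
      show "u ` E \<subseteq> {-1}" using EK fK by (auto simp: u_def)
      obtain e where e: "e \<in> E" using Ene by blast
      then have "u e = -1" using EK fK by (auto simp: u_def)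
      then show "{-1} \<subseteq> u ` E" using e by (metis empty_subsetI image_eqI insert_subset)
    qed
    ultimately have supeq: "Sup (u ` (- K \<union> E)) = -1" by simp
    have bddU: "bdd_above (u ` (- K \<union> E))" using ubounded by (rule bounded_imp_bdd_above)
    have f1: "f y = 1" for y
    proof (cases "y \<in> K")
      case True then show ?thesis by (rule fK)
    next
      case False
      then have "u y \<le> Sup (u ` (- K \<union> E))" using bddU by (intro cSup_upper) auto
      then show ?thesis using supeq f01[of y] by (simp add: u_def)
    qed
    have Lf0: "Lsum f x = 0" for x by (simp add: Lsum_def f1)
    have enF: "energy b (\<lambda>x. 0) p (F n) = (\<Sum>x\<in>K. Lsum (F n) x)" for n
    proof -
      have "energy b (\<lambda>x. 0) p (F n) = ED (Bn n) (F n)" by (rule energy_ED[OF Bfin Fsupp])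
      also have "\<dots> = (\<Sum>x\<in>Bn n. F n x * LD (Bn n) (F n) x)" by (rule ED_green[OF Bfin])
      also have "\<dots> = (\<Sum>x\<in>Bn n. F n x * Lsum (F n) x)" using Lsum_LD(1)[OF Bfin Fsupp] by simp
      also have "\<dots> = (\<Sum>x\<in>Bn n - K. F n x * Lsum (F n) x) + (\<Sum>x\<in>K. F n x * Lsum (F n) x)"
        by (rule sum.subset_diff[OF KB Bfin])
      also have "(\<Sum>x\<in>Bn n - K. F n x * Lsum (F n) x) = 0" by (intro sum.neutral) (simp add: Fharm)
      also have "(\<Sum>x\<in>K. F n x * Lsum (F n) x) = (\<Sum>x\<in>K. Lsum (F n) x)" by (intro sum.cong refl) (simp add: FK)
      finally show ?thesis by simp
    qed
    have "(\<lambda>n. energy b (\<lambda>x. 0) p (F n)) \<longlonglongrightarrow> (\<Sum>x\<in>K. Lsum f x)"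
      unfolding enF by (intro tendsto_sum Ltend)
    then have entend: "(\<lambda>n. energy b (\<lambda>x. 0) p (F n)) \<longlonglongrightarrow> 0" using Lf0 by simp
    have "Inf Set \<le> energy b (\<lambda>x. 0) p (F n)" for n
    proof (rule cInf_lower[OF inSet bdd])
      have "{x. F n x \<noteq> 0} \<subseteq> Bn n" using Fsupp by blast
      then show "finite {x. F n x \<noteq> 0}" using Bfin finite_subset by blast
      show "\<forall>x\<in>K. 1 \<le> F n x" using FK by simp
    qed
    then show ?thesis using LIMSEQ_le_const[OF entend] by blast
  qed
  show "Inf {energy b (\<lambda>x. 0) p \<phi> | \<phi>. finite {x. \<phi> x \<noteq> 0} \<and> (\<forall>x\<in>K. 1 \<le> \<phi> x)} = 0"
    using ge le unfolding Set_def by simp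
qed

end

theorem proposition3p12:
  fixes b :: "'a \<Rightarrow> 'a \<Rightarrow> real" and m c :: "'a \<Rightarrow> real" and p :: real
  assumes "weighted_graph b m c"
    and "c = (\<lambda>x. 0)"
    and "1 < p"
  shows "p_parabolic b c p \<longleftrightarrow>
    (\<forall>V u. V \<noteq> UNIV \<longrightarrow> edge_boundary b V \<noteq> {} \<longrightarrow>
       bounded (u ` (V \<union> edge_boundary b V)) \<longrightarrow>
       u \<in> Fp b p V \<longrightarrow>
       (\<forall>x\<in>V. p_laplacian b m p u x \<le> 0) \<longrightarrow>
       Sup (u ` (V \<union> edge_boundary b V)) = Sup (u ` edge_boundary b V))"
proof -
  have W: "countable (UNIV :: 'a set)" "infinite (UNIV :: 'a set)"
    "\<And>x y. b x y = b y x" "\<And>x y. 0 \<le> b x y" "\<And>x. b x x = 0"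
    "\<And>x. (\<lambda>y. b x y) summable_on UNIV" "\<And>x. 0 < m x"
    "\<And>x y. (\<lambda>u v. 0 < b u v)\<^sup>*\<^sup>* x y"
    using assms(1) unfolding weighted_graph_def by auto
  interpret wg b p
    by unfold_locales (use W assms(3) in auto)
  show ?thesis
  proof
    assume par: "p_parabolic b c p"
    show "\<forall>V u. V \<noteq> UNIV \<longrightarrow> edge_boundary b V \<noteq> {} \<longrightarrow>
       bounded (u ` (V \<union> edge_boundary b V)) \<longrightarrow>
       u \<in> Fp b p V \<longrightarrow>
       (\<forall>x\<in>V. p_laplacian b m p u x \<le> 0) \<longrightarrow>
       Sup (u ` (V \<union> edge_boundary b V)) = Sup (u ` edge_boundary b V)"
      using dir1[of m, OF par[unfolded assms(2)] W(7)] by blast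
  next
    assume ii: "\<forall>V u. V \<noteq> UNIV \<longrightarrow> edge_boundary b V \<noteq> {} \<longrightarrow>
       bounded (u ` (V \<union> edge_boundary b V)) \<longrightarrow>
       u \<in> Fp b p V \<longrightarrow>
       (\<forall>x\<in>V. p_laplacian b m p u x \<le> 0) \<longrightarrow>
       Sup (u ` (V \<union> edge_boundary b V)) = Sup (u ` edge_boundary b V)"
    show "p_parabolic b c p" unfolding assms(2) by (rule dir2[OF W(1) ii])
  qed
qed

end
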